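(* Fix $q\in[0,1)$. For $n\in\mathbb{N}$ let $\Pi_n$ be $\pi_{n,q}$-distributed and let $\Pi_\infty$ be a Mallows permutation on $\mathbb{N}$ with parameter $q$. Then $\mathrm{BST}(\Pi_n)$ converges to $\mathrm{BST}(\Pi_\infty)$ in the rooted topology: for every $r\ge1$ and every finite rooted tree $t$, $$\mathbb{P}\big(B_r(\varnothing,\mathrm{BST}(\Pi_n))\equiv t\big)\longrightarrow\mathbb{P}\big(B_r(\varnothing,\mathrm{BST}(\Pi_\infty))\equiv t\big)\quad(n\to\infty).$$
   Context: $\pi_{n,q}(\sigma)=q^{\mathrm{Inv}(\sigma)}/Z_{n,q}$ on $S_n$, $\mathrm{Inv}(\sigma)=|\{i<j:\sigma(i)>\sigma(j)\}|$, $0^0=1$. A Mallows permutation on $\mathbb{N}$ with parameter $q$ is the permutation $(I_1,I_2,\dots)$ of $\mathbb{N}$ where, for independent Bernoulli$(1-q)$ variables $(B_{i,j})_{i,j\ge1}$, $I_i=\min\{j\notin\{I_1,\dots,I_{i-1}\}:B_{i,j}=1\}$. $\mathbb{T}$ is the set of finite words over $\{0,1\}$ with empty word $\varnothing$ (the root), viewed as a graph with edges $\{w,w0\},\{w,w1\}$; $aS=\{aw:w\in S\}$. For a finite sequence $x=(x_1,\dots,x_n)$ of distinct numbers, $\mathrm{BST}(x)=\emptyset$ if $n=0$, else $\{\varnothing\}\cup0\,\mathrm{BST}(x_-)\cup1\,\mathrm{BST}(x_+)$ with $x_-$ (resp. $x_+$) the subsequence of entries smaller (resp. larger) than $x_1$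 in original order; for infinite $x$, $\mathrm{BST}(x)=\bigcup_n\mathrm{BST}(x_1,\dots,x_n)$; $\mathrm{BST}(\sigma)=\mathrm{BST}(\sigma(1),\sigma(2),\dots)$, seen as an induced subgraph of $\mathbb{T}$. $B_r(v,G)$ is the subgraph of $G$ induced by vertices within graph distance $r$ of $v$, rooted at $v$; $\equiv$ is rooted-graph isomorphism. *)

theory Defs
  imports "HOL-Probability.Probability" "HOL-Combinatorics.Permutations"
begin

definition inv_count :: "nat \<Rightarrow> (nat \<Rightarrow> nat) \<Rightarrow> nat" where
  "inv_count n \<sigma> = card {(i, j). 1 \<le> i \<and> i < j \<and> j \<le> n \<and> \<sigma> j < \<sigma> i}"

definition mallows_Z :: "real \<Rightarrow> nat \<Rightarrow> real" where
  "mallows_Z q n = (\<Sum>\<sigma> | \<sigma> permutes {1..n}. q ^ inv_count n \<sigma>)"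

definition mallows_prob :: "real \<Rightarrow> nat \<Rightarrow> ((nat \<Rightarrow> nat) \<Rightarrow> bool) \<Rightarrow> real" where
  "mallows_prob q n P =
     (\<Sum>\<sigma> | \<sigma> permutes {1..n} \<and> P \<sigma>. q ^ inv_count n \<sigma>) / mallows_Z q n"

section \<open>Binary search trees as sets of words over {0,1} (False = 0, True = 1)\<close>

function bst :: "nat list \<Rightarrow> bool list set" where
  "bst [] = {}"
| "bst (x # xs) = {[]} \<union> Cons False ` bst (filter (\<lambda>y. y < x) xs)
                       \<union> Cons True ` bst (filter (\<lambda>y. x < y) xs)"
  by pat_completeness auto
termination
  by (relation "Wellfounded.measure length") (auto simp: le_imp_less_Suc)

definition bst_perm :: "nat \<Rightarrow> (nat \<Rightarrow> nat) \<Rightarrow> bool list set" where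
  "bst_perm n \<sigma> = bst (map \<sigma> [1..<Suc n])"

text \<open>First i values I_1,...,I_i built from the Bernoulli array B.\<close>
primrec mallows_list :: "(nat \<times> nat \<Rightarrow> bool) \<Rightarrow> nat \<Rightarrow> nat list" where
  "mallows_list B 0 = []"
| "mallows_list B (Suc i) =
     mallows_list B i @ [LEAST j. 1 \<le> j \<and> j \<notin> set (mallows_list B i) \<and> B (Suc i, j)]"

definition bst_inf :: "(nat \<times> nat \<Rightarrow> bool) \<Rightarrow> bool list set" where
  "bst_inf B = (\<Union>n. bst (mallows_list B n))"

definition bern_array :: "real \<Rightarrow> (nat \<times> nat \<Rightarrow> bool) measure" where
  "bern_array q = (\<Pi>\<^sub>M ij\<in>UNIV. measure_pmf (bernoulli_pmf (1 - q)))"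

definition tadj :: "bool list \<Rightarrow> bool list \<Rightarrow> bool" where
  "tadj u w \<longleftrightarrow> (\<exists>b. w = u @ [b]) \<or> (\<exists>b. u = w @ [b])"

inductive walk_in :: "bool list set \<Rightarrow> nat \<Rightarrow> bool list \<Rightarrow> bool list \<Rightarrow> bool"
  for V where
  "u \<in> V \<Longrightarrow> walk_in V 0 u u"
| "walk_in V k u x \<Longrightarrow> tadj x w \<Longrightarrow> w \<in> V \<Longrightarrow> walk_in V (Suc k) u w"

definition ball_verts :: "nat \<Rightarrow> bool list \<Rightarrow> bool list set \<Rightarrow> bool list set" where
  "ball_verts r v V = {w. \<exists>k\<le>r. walk_in V k v w}"

definition finite_rooted_tree :: "'a set \<Rightarrow> ('a \<times> 'a) set \<Rightarrow> 'a \<Rightarrow> bool" where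
  "finite_rooted_tree T E \<rho> \<longleftrightarrow>
     finite T \<and> \<rho> \<in> T \<and> E \<subseteq> T \<times> T \<and> sym E \<and> irrefl E \<and>
     (\<forall>v\<in>T. (\<rho>, v) \<in> E\<^sup>*) \<and>
     card {{u, v} | u v. (u, v) \<in> E} + 1 = card T"

text \<open>Rooted isomorphism between B_r(v, G) (G induced subgraph of the binary tree on V)
  and the rooted graph (T, E, rho).\<close>
definition ball_iso :: "nat \<Rightarrow> bool list \<Rightarrow> bool list set \<Rightarrow> 'a set \<Rightarrow> ('a \<times> 'a) set \<Rightarrow> 'a \<Rightarrow> bool" where
  "ball_iso r v V T E \<rho> \<longleftrightarrow>
     (\<exists>f. bij_betw f (ball_verts r v V) T \<and> f v = \<rho> \<and>
          (\<forall>x\<in>ball_verts r v V. \<forall>y\<in>ball_verts r v V. tadj x y \<longleftrightarrow> (f x, f y) \<in> E))"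

end

theory Submission
  imports Defs "HOL-Combinatorics.Multiset_Permutations"
begin



definition pclosed :: "bool list set \<Rightarrow> bool" where
  "pclosed V \<longleftrightarrow> (\<forall>w b. w @ [b] \<in> V \<longrightarrow> w \<in> V)"

definition trunc :: "nat \<Rightarrow> bool list set \<Rightarrow> bool list set" where
  "trunc r V = {w \<in> V. length w \<le> r}"

lemma bst_pclosed: "pclosed (bst xs)"
  unfolding pclosed_def
proof (induction xs rule: bst.induct)
  case 1 then show ?case by simp
next
  case (2 x xs)
  show ?case
  proof (intro allI impI)
    fix w b assume h: "w @ [b] \<in> bst (x # xs)"
    show "w \<in> bst (x # xs)"
    proof (cases w)
      case Nil then show ?thesis by simp
    next
      case (Cons c w')
      then show ?thesis using h 2 by (cases c) auto
    qed
  qed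
qed

lemma bst_mono_append: "bst xs \<subseteq> bst (xs @ ys)"
proof (induction xs arbitrary: ys rule: bst.induct)
  case 1 then show ?case by simp
next
  case (2 x xs)
  have a: "bst (filter (\<lambda>y. y < x) xs) \<subseteq> bst (filter (\<lambda>y. y < x) (xs @ ys))"
    using 2(1)[of "filter (\<lambda>y. y < x) ys"] by simp
  have b: "bst (filter (\<lambda>y. x < y) xs) \<subseteq> bst (filter (\<lambda>y. x < y) (xs @ ys))"
    using 2(2)[of "filter (\<lambda>y. x < y) ys"] by simp
  show ?case using a b by auto
qed

lemma walk_in_len: "walk_in V k u w \<Longrightarrow> w \<in> V \<and> length w \<le> length u + k"
  by (induction rule: walk_in.induct) (auto simp: tadj_def)

lemma pclosed_walk: "pclosed V \<Longrightarrow> w \<in> V \<Longrightarrow> walk_in V (length w) [] w"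
proof (induction w rule: rev_induct)
  case Nil then show ?case by (simp add: walk_in.intros(1))
next
  case (snoc b w)
  have "w \<in> V" using snoc pclosed_def by blast
  then have "walk_in V (length w) [] w" using snoc by blast
  moreover have "tadj w (w @ [b])" by (simp add: tadj_def)
  ultimately show ?case using snoc walk_in.intros(2) by fastforce
qed

lemma ball_verts_trunc: "pclosed V \<Longrightarrow> ball_verts r [] V = trunc r V"
  unfolding ball_verts_def trunc_def
proof (intro set_eqI iffI)
  fix w assume "w \<in> {w. \<exists>k\<le>r. walk_in V k [] w}"
  then show "w \<in> {w \<in> V. length w \<le> r}" using walk_in_len by fastforce
next
  fix w assume "pclosed V" "w \<in> {w \<in> V. length w \<le> r}"
  then show "w \<in> {w. \<exists>k\<le>r. walk_in V k [] w}" using pclosed_walk by blast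
qed

lemma ball_iso_cong: "ball_verts r v V = ball_verts r v V' \<Longrightarrow>
   ball_iso r v V T E \<rho> = ball_iso r v V' T E \<rho>"
  unfolding ball_iso_def by simp

lemma bst_map_mono:
  assumes "strict_mono_on (set xs) f"
  shows "bst (map f xs) = bst xs"
  using assms
proof (induction xs rule: bst.induct)
  case 1 then show ?case by simp
next
  case (2 x xs)
  have sm: "strict_mono_on (set (x#xs)) f" by fact
  have l: "filter (\<lambda>y. y < f x) (map f xs) = map f (filter (\<lambda>y. y < x) xs)"
  proof -
    have "\<And>y. y \<in> set xs \<Longrightarrow> (f y < f x) = (y < x)"
      using sm by (metis list.set_intros(1) list.set_intros(2) strict_mono_on_less)
    then show ?thesis by (induction xs) auto
  qed
  have r: "filter (\<lambda>y. f x < y) (map f xs) = map f (filter (\<lambda>y. x < y) xs)"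
  proof -
    have "\<And>y. y \<in> set xs \<Longrightarrow> (f x < f y) = (x < y)"
      using sm by (metis list.set_intros(1) list.set_intros(2) strict_mono_on_less)
    then show ?thesis by (induction xs) auto
  qed
  have s1: "strict_mono_on (set (filter (\<lambda>y. y < x) xs)) f"
    using sm by (auto simp: strict_mono_on_def)
  have s2: "strict_mono_on (set (filter (\<lambda>y. x < y) xs)) f"
    using sm by (auto simp: strict_mono_on_def)
  show ?case using 2(1)[OF s1] 2(2)[OF s2] l r by simp
qed




definition invl :: "nat list \<Rightarrow> nat" where
  "invl xs = card {(i, j). i < j \<and> j < length xs \<and> xs ! j < xs ! i}"

definition AL :: "nat \<Rightarrow> nat \<Rightarrow> nat list set" where
  "AL M N = {a. distinct a \<and> set a \<subseteq> {1..M} \<and> length a = N}"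

definition Gc :: "nat list \<Rightarrow> nat" where
  "Gc a = (\<Sum>i<length a. card ({1..<a ! i} - set (take i a)))"

lemma Gc_snoc: "Gc (a @ [v]) = Gc a + card ({1..<v} - set a)"
  unfolding Gc_def by (simp add: nth_append)

lemma finite_AL: "finite (AL M N)"
proof -
  have "AL M N \<subseteq> {xs. set xs \<subseteq> {1..M} \<and> length xs = N}" unfolding AL_def by auto
  moreover have "finite {xs. set xs \<subseteq> {1..M} \<and> length xs = N}"
    by (rule finite_lists_length_eq) simp
  ultimately show ?thesis by (rule finite_subset)
qed

lemma AL_0: "AL M 0 = {[]}" unfolding AL_def by auto

lemma AL_Suc: "AL M (Suc N) = (\<lambda>(a, v). a @ [v]) ` (SIGMA a:AL M N. {1..M} - set a)"
proof (intro set_eqI iffI)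
  fix xs assume "xs \<in> AL M (Suc N)"
  then have h: "distinct xs" "set xs \<subseteq> {1..M}" "length xs = Suc N" unfolding AL_def by auto
  then obtain a v where xs: "xs = a @ [v]" by (metis length_Suc_conv_rev)
  show "xs \<in> (\<lambda>(a, v). a @ [v]) ` (SIGMA a:AL M N. {1..M} - set a)"
    using h unfolding xs AL_def by (auto intro!: image_eqI[where x="(a,v)"])
next
  fix xs assume "xs \<in> (\<lambda>(a, v). a @ [v]) ` (SIGMA a:AL M N. {1..M} - set a)"
  then show "xs \<in> AL M (Suc N)" unfolding AL_def by auto
qed

lemma sum_AL_Suc:
  "(\<Sum>xs\<in>AL M (Suc N). g xs) = (\<Sum>a\<in>AL M N. \<Sum>v\<in>{1..M} - set a. g (a @ [v]))"
proof -
  have inj: "inj_on (\<lambda>(a, v). a @ [v]) (SIGMA a:AL M N. {1..M} - set a)"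
    by (auto simp: inj_on_def)
  have "(\<Sum>xs\<in>AL M (Suc N). g xs) = (\<Sum>p\<in>(SIGMA a:AL M N. {1..M} - set a). g ((\<lambda>(a, v). a @ [v]) p))"
    unfolding AL_Suc by (rule sum.reindex[OF inj, unfolded comp_def])
  also have "\<dots> = (\<Sum>a\<in>AL M N. \<Sum>v\<in>{1..M} - set a. g (a @ [v]))"
    using sum.Sigma[of "AL M N" "\<lambda>a. {1..M} - set a" "\<lambda>a v. g (a@[v])"] finite_AL
    by (simp add: split_beta)
  finally show ?thesis .
qed

lemma rank_sum:
  fixes U :: "nat set"
  assumes "finite U"
  shows "(\<Sum>v\<in>U. g (card {u\<in>U. u < v})) = (\<Sum>i<card U. g i)"
  using assms
proof (induction "card U" arbitrary: U)
  case 0 then show ?case by simp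
next
  case (Suc n)
  then have ne: "U \<noteq> {}" by auto
  define m where "m = Max U"
  have mU: "m \<in> U" using Suc ne m_def by simp
  define U' where "U' = U - {m}"
  have fU': "finite U'" using Suc U'_def by simp
  have cU': "card U' = n" using Suc mU U'_def by simp
  have eq1: "\<And>v. v \<in> U' \<Longrightarrow> {u\<in>U. u < v} = {u\<in>U'. u < v}"
  proof -
    fix v assume "v \<in> U'"
    then have "v < m" using Suc U'_def m_def by (metis DiffE Max_ge insertI1 le_neq_implies_less)
    then show "{u\<in>U. u < v} = {u\<in>U'. u < v}" using U'_def by auto
  qed
  have eq2: "{u\<in>U. u < m} = U'"
    using Suc U'_def m_def by (auto simp: less_le)
  have U: "U = insert m U'" using mU U'_def by auto
  have "(\<Sum>v\<in>U. g (card {u\<in>U. u < v})) = g (card U') + (\<Sum>v\<in>U'. g (card {u\<in>U. u < v}))"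
    using sum.remove[OF Suc(3) mU, of "\<lambda>v. g (card {u\<in>U. u < v})"] eq2 U'_def by simp
  also have "(\<Sum>v\<in>U'. g (card {u\<in>U. u < v})) = (\<Sum>v\<in>U'. g (card {u\<in>U'. u < v}))"
    using eq1 by simp
  also have "\<dots> = (\<Sum>i<n. g i)" using Suc(1)[of U'] fU' cU' by simp
  finally show ?case using cU' Suc(2)[symmetric] by (simp add: add.commute)
qed

lemma sum_Gc:
  fixes q :: real
  shows "(\<Sum>a\<in>AL M N. q ^ Gc a) = (\<Prod>k<N. \<Sum>i<M - k. q ^ i)"
proof (induction N)
  case 0 then show ?case by (simp add: AL_0 Gc_def)
next
  case (Suc N)
  have inner: "(\<Sum>v\<in>{1..M} - set a. q ^ Gc (a @ [v])) = q ^ Gc a * (\<Sum>i<M - N. q ^ i)"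
    if a: "a \<in> AL M N" for a
  proof -
    let ?U = "{1..M} - set a"
    have cU: "card ?U = M - N"
      using a unfolding AL_def by (simp add: card_Diff_subset distinct_card)
    have "\<And>v. v \<in> ?U \<Longrightarrow> {1..<v} - set a = {u \<in> ?U. u < v}" by auto
    then have "(\<Sum>v\<in>?U. q ^ Gc (a @ [v])) = (\<Sum>v\<in>?U. q ^ Gc a * q ^ card {u \<in> ?U. u < v})"
      by (simp add: Gc_snoc power_add)
    also have "\<dots> = q ^ Gc a * (\<Sum>v\<in>?U. q ^ card {u \<in> ?U. u < v})"
      by (simp add: sum_distrib_left)
    also have "\<dots> = q ^ Gc a * (\<Sum>i<M - N. q ^ i)"
      using rank_sum[of ?U "\<lambda>i. q ^ i"] cU by simp
    finally show ?thesis .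
  qed
  have "(\<Sum>a\<in>AL M (Suc N). q ^ Gc a) = (\<Sum>a\<in>AL M N. q ^ Gc a * (\<Sum>i<M - N. q ^ i))"
    unfolding sum_AL_Suc using inner by simp
  also have "\<dots> = (\<Sum>a\<in>AL M N. q ^ Gc a) * (\<Sum>i<M - N. q ^ i)"
    by (simp add: sum_distrib_right)
  finally show ?case using Suc by simp
qed

lemma invl_snoc:
  assumes "distinct a"
  shows "invl (a @ [v]) = invl a + card {x \<in> set a. v < x}"
proof -
  let ?P = "{(i, j). i < j \<and> j < length a \<and> a ! j < a ! i}"
  let ?Q = "{i. i < length a \<and> v < a ! i}"
  have eq: "{(i, j). i < j \<and> j < length (a @ [v]) \<and> (a @ [v]) ! j < (a @ [v]) ! i}
          = ?P \<union> (\<lambda>i. (i, length a)) ` ?Q"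
    by (auto simp: nth_append less_Suc_eq)
  have fP: "finite ?P" by (rule finite_subset[of _ "{..<length a} \<times> {..<length a}"]) auto
  have fQ: "finite ?Q" by simp
  have disj: "?P \<inter> (\<lambda>i. (i, length a)) ` ?Q = {}" by auto
  have c1: "card ((\<lambda>i. (i, length a)) ` ?Q) = card ?Q" by (rule card_image) (auto simp: inj_on_def)
  have c2: "card ?Q = card {x \<in> set a. v < x}"
  proof -
    have "(\<lambda>i. a ! i) ` ?Q = {x \<in> set a. v < x}" by (auto simp: in_set_conv_nth)
    moreover have "inj_on (\<lambda>i. a ! i) ?Q" using assms by (auto simp: inj_on_def nth_eq_iff_index_eq)
    ultimately show ?thesis using card_image by fastforce
  qed
  show ?thesis unfolding invl_def eq
    by (subst card_Un_disjoint) (use fP fQ disj c1 c2 in auto)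
qed

definition hS :: "nat set \<Rightarrow> nat" where
  "hS S = (\<Sum>x\<in>S. card ({1..<x} - S))"

lemma hS_insert:
  assumes "finite S" "v \<notin> S" "1 \<le> v"
  shows "hS (insert v S) + card {x \<in> S. v < x} = hS S + card ({1..<v} - S)"
proof -
  have per: "card ({1..<x} - insert v S) + (if v < x then 1 else 0) = card ({1..<x} - S)" if "x \<in> S" for x
  proof (cases "v < x")
    case True
    then have "v \<in> {1..<x} - S" using assms by auto
    then have "card ({1..<x} - S) = Suc (card ({1..<x} - S - {v}))"
      by (metis card_Suc_Diff1 finite_Diff finite_atLeastLessThan)
    moreover have "{1..<x} - insert v S = {1..<x} - S - {v}" by auto
    ultimately show ?thesis using True by simp
  next
    case False
    then have "{1..<x} - insert v S = {1..<x} - S" by auto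
    then show ?thesis using False by simp
  qed
  have "hS (insert v S) = card ({1..<v} - insert v S) + (\<Sum>x\<in>S. card ({1..<x} - insert v S))"
    unfolding hS_def using assms by (simp add: sum.insert)
  moreover have "{1..<v} - insert v S = {1..<v} - S" by auto
  moreover have "card {x \<in> S. v < x} = (\<Sum>x\<in>S. (if v < x then 1 else 0))"
  proof -
    have "{x \<in> S. v < x} = S \<inter> {x. v < x}" by auto
    then show ?thesis using assms(1) by (simp add: sum.If_cases)
  qed
  ultimately have "hS (insert v S) + card {x \<in> S. v < x}
     = card ({1..<v} - S) + (\<Sum>x\<in>S. card ({1..<x} - insert v S) + (if v < x then 1 else 0))"
    by (simp add: sum.distrib)
  also have "\<dots> = card ({1..<v} - S) + hS S" unfolding hS_def using per by simp
  finally show ?thesis by simp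
qed

lemma Gc_decomp:
  assumes "distinct a" "0 \<notin> set a"
  shows "Gc a = invl a + hS (set a)"
  using assms
proof (induction a rule: rev_induct)
  case Nil then show ?case by (simp add: Gc_def invl_def hS_def)
next
  case (snoc v a)
  have d: "distinct a" "v \<notin> set a" "1 \<le> v" using snoc.prems by auto
  have "Gc (a @ [v]) = invl a + hS (set a) + card ({1..<v} - set a)"
    using snoc d by (simp add: Gc_snoc)
  also have "\<dots> = invl a + hS (insert v (set a)) + card {x \<in> set a. v < x}"
    using hS_insert[of "set a" v] d by simp
  also have "\<dots> = invl (a @ [v]) + hS (set (a @ [v]))"
    using invl_snoc[OF d(1)] by simp
  finally show ?case .
qed

lemma invl_map_mono:
  assumes "strict_mono_on (set xs) f"
  shows "invl (map f xs) = invl xs"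
proof -
  have "\<And>i j. i < length xs \<Longrightarrow> j < length xs \<Longrightarrow> (f (xs ! j) < f (xs ! i)) = (xs ! j < xs ! i)"
    using assms by (simp add: strict_mono_on_less)
  then show ?thesis unfolding invl_def
    by (intro arg_cong[where f=card]) auto
qed

definition phi :: "nat set \<Rightarrow> nat \<Rightarrow> nat" where
  "phi S i = sorted_list_of_set S ! (i - 1)"

lemma phi_props:
  assumes "finite S" "card S = N"
  shows "bij_betw (phi S) {1..N} S" "strict_mono_on {1..N} (phi S)"
proof -
  let ?l = "sorted_list_of_set S"
  have len: "length ?l = N" using assms by simp
  have ss: "sorted_wrt (<) ?l" using assms by (simp add: strict_sorted_list_of_set)
  have st: "set ?l = S" using assms by simp
  show sm: "strict_mono_on {1..N} (phi S)"
  proof (rule strict_mono_onI)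
    fix x y assume "x \<in> {1..N}" "y \<in> {1..N}" "x < y"
    then show "phi S x < phi S y" unfolding phi_def using sorted_wrt_nth_less[OF ss, of "x-1" "y-1"] len
      by auto
  qed
  have inj: "inj_on (phi S) {1..N}" using sm strict_mono_on_imp_inj_on by blast
  have img: "phi S ` {1..N} = S"
  proof
    show "phi S ` {1..N} \<subseteq> S"
    proof
      fix y assume "y \<in> phi S ` {1..N}"
      then obtain x where x: "x \<in> {1..N}" "y = ?l ! (x - 1)" unfolding phi_def by auto
      then have "x - 1 < length ?l" using len by auto
      then show "y \<in> S" using x st nth_mem by metis
    qed
    show "S \<subseteq> phi S ` {1..N}"
    proof
      fix x assume "x \<in> S"
      then obtain k where k: "k < N" "?l ! k = x" using st len by (metis in_set_conv_nth)
      then show "x \<in> phi S ` {1..N}" unfolding phi_def by (intro image_eqI[where x="Suc k"]) auto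
    qed
  qed
  show "bij_betw (phi S) {1..N} S" using inj img by (simp add: bij_betw_def)
qed

lemma map_bij_perms:
  assumes "bij_betw g A B"
  shows "bij_betw (map g) (permutations_of_set A) (permutations_of_set B)"
proof -
  have inj: "inj_on g A" and img: "g ` A = B" using assms by (auto simp: bij_betw_def)
  show ?thesis
  proof (rule bij_betw_byWitness[where f'="map (inv_into A g)"])
    show "\<forall>a\<in>permutations_of_set A. map (inv_into A g) (map g a) = a"
      using inj by (auto simp: permutations_of_set_def map_idI)
    show "\<forall>a'\<in>permutations_of_set B. map g (map (inv_into A g) a') = a'"
      using img by (auto simp: permutations_of_set_def f_inv_into_f intro!: map_idI)
    show "map g ` permutations_of_set A \<subseteq> permutations_of_set B"
      using inj img by (auto simp: permutations_of_set_def distinct_map inj_on_subset)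
    show "map (inv_into A g) ` permutations_of_set B \<subseteq> permutations_of_set A"
    proof
      fix xs assume "xs \<in> map (inv_into A g) ` permutations_of_set B"
      then obtain b where b: "b \<in> permutations_of_set B" "xs = map (inv_into A g) b" by auto
      have "inj_on (inv_into A g) B" using img inj_on_inv_into by blast
      moreover have "inv_into A g ` B = A" using inj img by (metis order_refl inv_into_image_cancel)
      ultimately show "xs \<in> permutations_of_set A" using b
        by (auto simp: permutations_of_set_def distinct_map inj_on_subset)
    qed
  qed
qed

definition Ssets :: "nat \<Rightarrow> nat \<Rightarrow> nat set set" where
  "Ssets M N = {S. S \<subseteq> {1..M} \<and> card S = N}"

lemma AL_UN: "AL M N = (\<Union>S\<in>Ssets M N. permutations_of_set S)"
  unfolding AL_def Ssets_def permutations_of_set_def by (auto simp: distinct_card)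

lemma pattern_sum:
  fixes q :: real and f :: "nat list \<Rightarrow> real"
  assumes inv: "\<And>\<tau> g. strict_mono_on (set \<tau>) g \<Longrightarrow> f (map g \<tau>) = f \<tau>"
  shows "(\<Sum>a\<in>AL M N. f a * q ^ Gc a)
       = (\<Sum>S\<in>Ssets M N. q ^ hS S) * (\<Sum>\<tau>\<in>permutations_of_set {1..N}. f \<tau> * q ^ invl \<tau>)"
proof -
  have fin: "finite (Ssets M N)" unfolding Ssets_def
    by (rule finite_subset[of _ "Pow {1..M}"]) auto
  have "(\<Sum>a\<in>AL M N. f a * q ^ Gc a) = (\<Sum>S\<in>Ssets M N. \<Sum>a\<in>permutations_of_set S. f a * q ^ Gc a)"
    unfolding AL_UN
    apply (rule sum.UNION_disjoint[OF fin])
     apply simp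
    by (auto simp: permutations_of_set_def)
  also have "\<dots> = (\<Sum>S\<in>Ssets M N. q ^ hS S * (\<Sum>\<tau>\<in>permutations_of_set {1..N}. f \<tau> * q ^ invl \<tau>))"
  proof (rule sum.cong[OF refl])
    fix S assume S: "S \<in> Ssets M N"
    then have fS: "finite S" and cS: "card S = N" and sub: "S \<subseteq> {1..M}"
      unfolding Ssets_def by (auto intro: finite_subset)
    have "(\<Sum>a\<in>permutations_of_set S. f a * q ^ Gc a) = (\<Sum>a\<in>permutations_of_set S. q ^ hS S * (f a * q ^ invl a))"
    proof (rule sum.cong[OF refl])
      fix a assume "a \<in> permutations_of_set S"
      then have "distinct a" "set a = S" by (auto simp: permutations_of_set_def)
      moreover then have "0 \<notin> set a" using sub by auto
      ultimately show "f a * q ^ Gc a = q ^ hS S * (f a * q ^ invl a)"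
        by (simp add: Gc_decomp power_add)
    qed
    also have "\<dots> = q ^ hS S * (\<Sum>a\<in>permutations_of_set S. f a * q ^ invl a)"
      by (simp add: sum_distrib_left)
    also have "(\<Sum>a\<in>permutations_of_set S. f a * q ^ invl a)
             = (\<Sum>\<tau>\<in>permutations_of_set {1..N}. f (map (phi S) \<tau>) * q ^ invl (map (phi S) \<tau>))"
      using map_bij_perms[OF phi_props(1)[OF fS cS]]
      by (rule sum.reindex_bij_betw[symmetric])
    also have "\<dots> = (\<Sum>\<tau>\<in>permutations_of_set {1..N}. f \<tau> * q ^ invl \<tau>)"
    proof (rule sum.cong[OF refl])
      fix \<tau> assume "\<tau> \<in> permutations_of_set {1..N}"
      then have "set \<tau> = {1..N}" by (simp add: permutations_of_set_def)
      then have sm: "strict_mono_on (set \<tau>) (phi S)" using phi_props(2)[OF fS cS] by simp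
      show "f (map (phi S) \<tau>) * q ^ invl (map (phi S) \<tau>) = f \<tau> * q ^ invl \<tau>"
        using inv[OF sm] invl_map_mono[OF sm] by simp
    qed
    finally show "(\<Sum>a\<in>permutations_of_set S. f a * q ^ Gc a) =
        q ^ hS S * (\<Sum>\<tau>\<in>permutations_of_set {1..N}. f \<tau> * q ^ invl \<tau>)" .
  qed
  also have "\<dots> = (\<Sum>S\<in>Ssets M N. q ^ hS S) * (\<Sum>\<tau>\<in>permutations_of_set {1..N}. f \<tau> * q ^ invl \<tau>)"
    by (simp add: sum_distrib_right)
  finally show ?thesis .
qed

lemma inv_count_invl: "inv_count N \<sigma> = invl (map \<sigma> [1..<Suc N])"
proof -
  let ?P = "{(i, j). i < j \<and> j < N \<and> \<sigma> (Suc j) < \<sigma> (Suc i)}"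
  have e1: "{(i, j). i < j \<and> j < length (map \<sigma> [1..<Suc N]) \<and> map \<sigma> [1..<Suc N] ! j < map \<sigma> [1..<Suc N] ! i} = ?P"
    by (auto simp: nth_map_upt add.commute simp del: upt_Suc)
  have e2: "{(i, j). 1 \<le> i \<and> i < j \<and> j \<le> N \<and> \<sigma> j < \<sigma> i} = (\<lambda>(i, j). (Suc i, Suc j)) ` ?P"
  proof (intro set_eqI iffI)
    fix p assume "p \<in> {(i, j). 1 \<le> i \<and> i < j \<and> j \<le> N \<and> \<sigma> j < \<sigma> i}"
    then obtain i j where p: "p = (i, j)" "1 \<le> i" "i < j" "j \<le> N" "\<sigma> j < \<sigma> i" by auto
    then show "p \<in> (\<lambda>(i, j). (Suc i, Suc j)) ` ?P"
      by (intro image_eqI[where x="(i - 1, j - 1)"]) auto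
  next
    fix p assume "p \<in> (\<lambda>(i, j). (Suc i, Suc j)) ` ?P"
    then show "p \<in> {(i, j). 1 \<le> i \<and> i < j \<and> j \<le> N \<and> \<sigma> j < \<sigma> i}" by auto
  qed
  have "card ((\<lambda>(i, j). (Suc i, Suc j)) ` ?P) = card ?P"
    by (rule card_image) (auto simp: inj_on_def)
  then show ?thesis unfolding inv_count_def invl_def e1 e2 by simp
qed

lemma perm_list_bij:
  "bij_betw (\<lambda>\<sigma>. map \<sigma> [1..<Suc N]) {\<sigma>. \<sigma> permutes {1..N}} (permutations_of_set {1..N})"
proof (rule bij_betw_byWitness[where f'="\<lambda>xs i. if i \<in> {1..N} then xs ! (i - 1) else i"])
  show "\<forall>a\<in>{\<sigma>. \<sigma> permutes {1..N}}. (\<lambda>i. if i \<in> {1..N} then map a [1..<Suc N] ! (i - 1) else i) = a"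
  proof
    fix \<sigma> assume "\<sigma> \<in> {\<sigma>. \<sigma> permutes {1..N}}"
    then have p: "\<sigma> permutes {1..N}" by simp
    show "(\<lambda>i. if i \<in> {1..N} then map \<sigma> [1..<Suc N] ! (i - 1) else i) = \<sigma>"
    proof
      fix i show "(if i \<in> {1..N} then map \<sigma> [1..<Suc N] ! (i - 1) else i) = \<sigma> i"
        using permutes_not_in[OF p, of i] by (auto simp: nth_map_upt simp del: upt_Suc)
    qed
  qed
  show "\<forall>a'\<in>permutations_of_set {1..N}. map (\<lambda>i. if i \<in> {1..N} then a' ! (i - 1) else i) [1..<Suc N] = a'"
  proof
    fix xs assume "xs \<in> permutations_of_set {1..N}"
    then have l: "length xs = N" by (metis length_finite_permutations_of_set card_atLeastAtMost diff_Suc_1 finite_atLeastAtMost)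
    show "map (\<lambda>i. if i \<in> {1..N} then xs ! (i - 1) else i) [1..<Suc N] = xs"
      by (rule nth_equalityI) (auto simp: l nth_map_upt simp del: upt_Suc)
  qed
  show "(\<lambda>\<sigma>. map \<sigma> [1..<Suc N]) ` {\<sigma>. \<sigma> permutes {1..N}} \<subseteq> permutations_of_set {1..N}"
  proof
    fix xs assume "xs \<in> (\<lambda>\<sigma>. map \<sigma> [1..<Suc N]) ` {\<sigma>. \<sigma> permutes {1..N}}"
    then obtain \<sigma> where p: "\<sigma> permutes {1..N}" and xs: "xs = map \<sigma> [1..<Suc N]" by auto
    have "set xs = \<sigma> ` {1..N}" unfolding xs by (auto simp: atLeastLessThanSuc_atLeastAtMost)
    also have "\<dots> = {1..N}" using permutes_image[OF p] .
    finally have "set xs = {1..N}" .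
    moreover have "distinct xs" unfolding xs using permutes_inj_on[OF p]
      by (simp add: distinct_map atLeastLessThanSuc_atLeastAtMost inj_on_subset)
    ultimately show "xs \<in> permutations_of_set {1..N}" by (simp add: permutations_of_set_def)
  qed
  show "(\<lambda>xs i. if i \<in> {1..N} then xs ! (i - 1) else i) ` permutations_of_set {1..N} \<subseteq> {\<sigma>. \<sigma> permutes {1..N}}"
  proof
    fix g assume "g \<in> (\<lambda>xs i. if i \<in> {1..N} then xs ! (i - 1) else i) ` permutations_of_set {1..N}"
    then obtain xs where xs: "xs \<in> permutations_of_set {1..N}" and g: "g = (\<lambda>i. if i \<in> {1..N} then xs ! (i - 1) else i)"
      by auto
    have l: "length xs = N" using xs by (metis length_finite_permutations_of_set card_atLeastAtMost diff_Suc_1 finite_atLeastAtMost)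
    have st: "set xs = {1..N}" "distinct xs" using xs by (auto simp: permutations_of_set_def)
    have img: "g ` {1..N} = {1..N}"
    proof
      show "g ` {1..N} \<subseteq> {1..N}"
      proof
        fix y assume "y \<in> g ` {1..N}"
        then obtain i where "i \<in> {1..N}" "y = xs ! (i - 1)" using g by auto
        then show "y \<in> {1..N}" using st l by (metis Suc_le_eq Suc_pred' atLeastAtMost_iff diff_less less_numeral_extra(1) nth_mem order_less_le_trans zero_less_one)
      qed
      show "{1..N} \<subseteq> g ` {1..N}"
      proof
        fix y assume "y \<in> {1..N}"
        then obtain k where k: "k < N" "xs ! k = y" using st l by (metis in_set_conv_nth)
        then show "y \<in> g ` {1..N}" using g by (intro image_eqI[where x="Suc k"]) auto
      qed
    qed
    have inj: "inj_on g {1..N}"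
    proof (rule inj_onI)
      fix i j assume "i \<in> {1..N}" "j \<in> {1..N}" "g i = g j"
      then have "xs ! (i - 1) = xs ! (j - 1)" "i - 1 < N" "j - 1 < N" using g by auto
      then have "i - 1 = j - 1" using st(2) l nth_eq_iff_index_eq by metis
      then show "i = j" using \<open>i \<in> {1..N}\<close> \<open>j \<in> {1..N}\<close> by auto
    qed
    have "g permutes {1..N}"
      by (rule bij_imp_permutes) (use img inj g in \<open>auto simp: bij_betw_def\<close>)
    then show "g \<in> {\<sigma>. \<sigma> permutes {1..N}}" by simp
  qed
qed




lemma space_bern: "space (bern_array q) = UNIV"
  unfolding bern_array_def by (simp add: space_PiM PiE_def extensional_def)

lemma prob_space_bern: "prob_space (bern_array q)"
  unfolding bern_array_def by (rule prob_space_PiM) (simp add: prob_space_measure_pmf)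

lemma coord_meas: "(\<lambda>B. B x) \<in> measurable (bern_array q) (count_space UNIV)"
proof -
  have "(\<lambda>B. B x) \<in> measurable (bern_array q) (measure_pmf (bernoulli_pmf (1 - q)))"
    unfolding bern_array_def by (rule measurable_component_singleton) simp
  then show ?thesis by (simp add: measurable_cong_sets)
qed

lemma ml_meas: "(\<lambda>B. mallows_list B n) \<in> measurable (bern_array q) (count_space UNIV)"
proof (induction n)
  case 0 then show ?case by (simp only: mallows_list.simps) (rule measurable_const, simp)
next
  case (Suc n)
  have step: "(\<lambda>B. l @ [LEAST j. 1 \<le> j \<and> j \<notin> set l \<and> B (Suc n, j)]) \<in> measurable (bern_array q) (count_space UNIV)"
    for l :: "nat list"
  proof -
    have L: "(\<lambda>B. LEAST j. 1 \<le> j \<and> j \<notin> set l \<and> B (Suc n, j)) \<in> measurable (bern_array q) (count_space UNIV)"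
    proof (rule measurable_Least)
      fix j :: nat
      show "(\<lambda>B. 1 \<le> j \<and> j \<notin> set l \<and> B (Suc n, j)) \<in> measurable (bern_array q) (count_space UNIV)"
      proof (cases "1 \<le> j \<and> j \<notin> set l")
        case True
        then have "(\<lambda>B. 1 \<le> j \<and> j \<notin> set l \<and> B (Suc n, j)) = (\<lambda>B. B (Suc n, j))" by simp
        then show ?thesis using coord_meas[of "(Suc n, j)" q] by (simp only:)
      next
        case False
        then have "(\<lambda>B. 1 \<le> j \<and> j \<notin> set l \<and> B (Suc n, j)) = (\<lambda>B. False)" by auto
        then show ?thesis by (simp only:) (rule measurable_const, simp)
      qed
    qed
    have "(\<lambda>x. l @ [x]) \<circ> (\<lambda>B. LEAST j. 1 \<le> j \<and> j \<notin> set l \<and> B (Suc n, j)) \<in> measurable (bern_array q) (count_space UNIV)"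
      by (rule measurable_comp[OF L measurable_count_space])
    then show ?thesis by (simp only: comp_def)
  qed
  have "(\<lambda>B. (\<lambda>l B. l @ [LEAST j. 1 \<le> j \<and> j \<notin> set l \<and> B (Suc n, j)]) (mallows_list B n) B)
        \<in> measurable (bern_array q) (count_space UNIV)"
    by (rule measurable_compose_countable[where f="\<lambda>l B. l @ [LEAST j. 1 \<le> j \<and> j \<notin> set l \<and> B (Suc n, j)]"
          and g="\<lambda>B. mallows_list B n", OF step Suc])
  then show ?case by (simp only: mallows_list.simps)
qed

lemma ml_event: "{B \<in> space (bern_array q). P (mallows_list B n)} \<in> sets (bern_array q)"
proof -
  have "{B \<in> space (bern_array q). P (mallows_list B n)} = (\<lambda>B. mallows_list B n) -` {l. P l} \<inter> space (bern_array q)"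
    by auto
  moreover have "(\<lambda>B. mallows_list B n) -` {l. P l} \<inter> space (bern_array q) \<in> sets (bern_array q)"
    by (rule measurable_sets[OF ml_meas]) (simp only: sets_count_space UNIV_I Pow_UNIV)
  ultimately show ?thesis by (simp only:)
qed

definition Jc :: "nat list \<Rightarrow> (nat \<times> nat) set" where
  "Jc a = {(Suc i, j) | i j. i < length a \<and> 1 \<le> j \<and> j \<le> a ! i \<and> j \<notin> set (take i a)}"

definition valc :: "nat list \<Rightarrow> nat \<times> nat \<Rightarrow> bool" where
  "valc a x = (snd x = a ! (fst x - 1))"

definition Cyl :: "nat list \<Rightarrow> (nat \<times> nat \<Rightarrow> bool) set" where
  "Cyl a = {B. \<forall>x\<in>Jc a. B x = valc a x}"

lemma finite_Jc: "finite (Jc a)"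
proof -
  have "Jc a \<subseteq> {..length a} \<times> {..sum_list a}"
    unfolding Jc_def using elem_le_sum_list[of _ a] by fastforce
  then show ?thesis by (rule finite_subset) simp
qed

lemma Jc_snoc: "Jc (a @ [v]) = Jc a \<union> (\<lambda>j. (Suc (length a), j)) ` ({1..v} - set a)"
  unfolding Jc_def by (auto simp: nth_append less_Suc_eq)

lemma valc_snoc_old: "x \<in> Jc a \<Longrightarrow> valc (a @ [v]) x = valc a x"
  unfolding Jc_def valc_def by (auto simp: nth_append)

lemma Cyl_ml:
  assumes "distinct a" "0 \<notin> set a" "B \<in> Cyl a"
  shows "mallows_list B (length a) = a"
  using assms
proof (induction a rule: rev_induct)
  case Nil then show ?case by simp
next
  case (snoc v a)
  have d: "distinct a" "0 \<notin> set a" "v \<notin> set a" "1 \<le> v" using snoc.prems by auto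
  have "B \<in> Cyl a" using snoc.prems(3) unfolding Cyl_def Jc_snoc using valc_snoc_old by auto
  then have ih: "mallows_list B (length a) = a" using snoc.IH d by simp
  have new: "B (Suc (length a), j) = (j = v)" if "j \<in> {1..v} - set a" for j
  proof -
    have "(Suc (length a), j) \<in> Jc (a @ [v])" unfolding Jc_snoc using that by auto
    then show ?thesis using snoc.prems(3) unfolding Cyl_def valc_def by auto
  qed
  have "(LEAST j. 1 \<le> j \<and> j \<notin> set a \<and> B (Suc (length a), j)) = v"
  proof (rule Least_equality)
    show "1 \<le> v \<and> v \<notin> set a \<and> B (Suc (length a), v)" using d new[of v] by auto
    fix j assume j: "1 \<le> j \<and> j \<notin> set a \<and> B (Suc (length a), j)"
    show "v \<le> j"
    proof (rule ccontr)
      assume "\<not> v \<le> j"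
      then have "j \<in> {1..v} - set a" using j by auto
      then show False using new[of j] j \<open>\<not> v \<le> j\<close> by auto
    qed
  qed
  then show ?case using ih by simp
qed

lemma Cyl_sets: "Cyl a \<in> sets (bern_array q)"
proof -
  have "Cyl a = (\<Inter>x\<in>Jc a. {B \<in> space (bern_array q). B x = valc a x})"
    unfolding Cyl_def space_bern by auto
  moreover have "{B \<in> space (bern_array q). B x = valc a x} \<in> sets (bern_array q)" for x
  proof -
    have "{B \<in> space (bern_array q). B x = valc a x} = (\<lambda>B. B x) -` {valc a x} \<inter> space (bern_array q)"
      by auto
    moreover have "(\<lambda>B. B x) -` {valc a x} \<inter> space (bern_array q) \<in> sets (bern_array q)"
      by (rule measurable_sets[OF coord_meas]) (simp only: sets_count_space UNIV_I Pow_UNIV)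
    ultimately show ?thesis by (simp only:)
  qed
  ultimately show ?thesis
    using finite_Jc[of a] sets.top[of "bern_array q"] by (cases "Jc a = {}") (auto simp: space_bern intro!: sets.finite_INT)
qed

lemma prod_Jc:
  fixes q :: real
  assumes "0 \<le> q" "q \<le> 1" "distinct a" "0 \<notin> set a"
  shows "(\<Prod>x\<in>Jc a. pmf (bernoulli_pmf (1 - q)) (valc a x)) = (1 - q) ^ length a * q ^ Gc a"
  using assms(3,4)
proof (induction a rule: rev_induct)
  case Nil then show ?case by (simp add: Jc_def Gc_def)
next
  case (snoc v a)
  have d: "distinct a" "0 \<notin> set a" "v \<notin> set a" "1 \<le> v" using snoc.prems by auto
  let ?p = "\<lambda>b. pmf (bernoulli_pmf (1 - q)) b"
  let ?N = "(\<lambda>j. (Suc (length a), j)) ` ({1..v} - set a)"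
  have disj: "Jc a \<inter> ?N = {}" unfolding Jc_def by auto
  have "(\<Prod>x\<in>Jc (a @ [v]). ?p (valc (a @ [v]) x)) = (\<Prod>x\<in>Jc a. ?p (valc (a @ [v]) x)) * (\<Prod>x\<in>?N. ?p (valc (a @ [v]) x))"
    unfolding Jc_snoc by (rule prod.union_disjoint) (use finite_Jc disj in auto)
  also have "(\<Prod>x\<in>Jc a. ?p (valc (a @ [v]) x)) = (\<Prod>x\<in>Jc a. ?p (valc a x))"
    using valc_snoc_old by simp
  also have "(\<Prod>x\<in>?N. ?p (valc (a @ [v]) x)) = (\<Prod>j\<in>{1..v} - set a. ?p (j = v))"
    by (subst prod.reindex) (auto simp: inj_on_def valc_def)
  also have "\<dots> = ?p True * (\<Prod>j\<in>{1..<v} - set a. ?p False)"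
  proof -
    have vin: "v \<in> {1..v} - set a" using d by auto
    have "(\<Prod>j\<in>{1..v} - set a. ?p (j = v)) = ?p (v = v) * (\<Prod>j\<in>({1..v} - set a) - {v}. ?p (j = v))"
      by (rule prod.remove[OF _ vin]) simp
    moreover have "({1..v} - set a) - {v} = {1..<v} - set a" by auto
    ultimately show ?thesis by simp
  qed
  also have "\<dots> = (1 - q) * q ^ card ({1..<v} - set a)" using assms(1,2) by simp
  finally have st: "(\<Prod>x\<in>Jc (a @ [v]). ?p (valc (a @ [v]) x)) =
      (\<Prod>x\<in>Jc a. ?p (valc a x)) * ((1 - q) * q ^ card ({1..<v} - set a))" .
  have ih: "(\<Prod>x\<in>Jc a. ?p (valc a x)) = (1 - q) ^ length a * q ^ Gc a" using snoc.IH d by simp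
  have "(1 - q) ^ length a * q ^ Gc a * ((1 - q) * q ^ card ({1..<v} - set a))
      = (1 - q) ^ Suc (length a) * q ^ (Gc a + card ({1..<v} - set a))"
    by (simp only: power_add power_Suc) (simp only: mult_ac)
  then show ?case using st ih by (simp only: Gc_snoc length_append_singleton)
qed

lemma measure_Cyl:
  fixes q :: real
  assumes "0 \<le> q" "q \<le> 1" "distinct a" "0 \<notin> set a"
  shows "measure (bern_array q) (Cyl a) = (1 - q) ^ length a * q ^ Gc a"
proof -
  let ?M = "\<lambda>_::nat\<times>nat. measure_pmf (bernoulli_pmf (1 - q))"
  have eq: "Cyl a = prod_emb UNIV ?M (Jc a) (\<Pi>\<^sub>E x\<in>Jc a. {valc a x})"
  proof (intro set_eqI)
    fix f :: "nat \<times> nat \<Rightarrow> bool"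
    have "f \<in> extensional UNIV" by (simp add: extensional_def)
    then show "f \<in> Cyl a \<longleftrightarrow> f \<in> prod_emb UNIV ?M (Jc a) (\<Pi>\<^sub>E x\<in>Jc a. {valc a x})"
      unfolding Cyl_def prod_emb_iff restrict_PiE_iff by simp
  qed
  have "emeasure (bern_array q) (Cyl a) = (\<Prod>x\<in>Jc a. emeasure (?M x) {valc a x})"
    unfolding eq bern_array_def
    by (rule emeasure_PiM_emb) (auto simp: prob_space_measure_pmf finite_Jc)
  also have "\<dots> = (\<Prod>x\<in>Jc a. ennreal (pmf (bernoulli_pmf (1 - q)) (valc a x)))"
    by (simp add: emeasure_pmf_single)
  also have "\<dots> = ennreal (\<Prod>x\<in>Jc a. pmf (bernoulli_pmf (1 - q)) (valc a x))"
    by (rule prod_ennreal) simp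
  also have "\<dots> = ennreal ((1 - q) ^ length a * q ^ Gc a)" using prod_Jc[OF assms] by simp
  finally have "emeasure (bern_array q) (Cyl a) = ennreal ((1 - q) ^ length a * q ^ Gc a)" .
  then show ?thesis using assms(1,2) by (simp add: measure_def)
qed




lemma ml_mono: "n \<le> m \<Longrightarrow> bst (mallows_list B n) \<subseteq> bst (mallows_list B m)"
  by (rule lift_Suc_mono_le[of "\<lambda>n. bst (mallows_list B n)"]) (auto simp: bst_mono_append)

lemma pclosed_inf: "pclosed (bst_inf B)"
  using bst_pclosed unfolding pclosed_def bst_inf_def by blast

lemma stab: "\<exists>n0. \<forall>n\<ge>n0. trunc r (bst (mallows_list B n)) = trunc r (bst_inf B)"
proof -
  let ?S = "trunc r (bst_inf B)"
  have fin: "finite ?S"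
  proof (rule finite_subset)
    show "?S \<subseteq> {xs. set xs \<subseteq> UNIV \<and> length xs \<le> r}" unfolding trunc_def by auto
    show "finite {xs :: bool list. set xs \<subseteq> UNIV \<and> length xs \<le> r}" by (rule finite_lists_length_le) simp
  qed
  define nw where "nw w = (SOME n. w \<in> bst (mallows_list B n))" for w
  have nw: "w \<in> bst (mallows_list B (nw w))" if "w \<in> ?S" for w
  proof -
    have "\<exists>n. w \<in> bst (mallows_list B n)" using that unfolding trunc_def bst_inf_def by auto
    then show ?thesis unfolding nw_def by (rule someI_ex)
  qed
  define n0 where "n0 = Max (insert 0 (nw ` ?S))"
  have "\<forall>n\<ge>n0. trunc r (bst (mallows_list B n)) = ?S"
  proof (intro allI impI)
    fix n assume n: "n0 \<le> n"
    show "trunc r (bst (mallows_list B n)) = ?S"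
    proof
      show "trunc r (bst (mallows_list B n)) \<subseteq> ?S" unfolding trunc_def bst_inf_def by auto
      show "?S \<subseteq> trunc r (bst (mallows_list B n))"
      proof
        fix w assume w: "w \<in> ?S"
        have "nw w \<le> n0" unfolding n0_def using fin w by auto
        then have "bst (mallows_list B (nw w)) \<subseteq> bst (mallows_list B n)" using n ml_mono by simp
        then show "w \<in> trunc r (bst (mallows_list B n))" using nw[OF w] w unfolding trunc_def by auto
      qed
    qed
  qed
  then show ?thesis by blast
qed

lemma evP:
  assumes Pinv: "\<And>V V'. pclosed V \<Longrightarrow> pclosed V' \<Longrightarrow> trunc r V = trunc r V' \<Longrightarrow> P V = P V'"
  shows "\<exists>n0. \<forall>n\<ge>n0. P (bst (mallows_list B n)) = P (bst_inf B)"
proof -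
  obtain n0 where n0: "\<forall>n\<ge>n0. trunc r (bst (mallows_list B n)) = trunc r (bst_inf B)"
    using stab[of r B] by blast
  have "\<forall>n\<ge>n0. P (bst (mallows_list B n)) = P (bst_inf B)"
  proof (intro allI impI)
    fix n assume "n0 \<le> n"
    then show "P (bst (mallows_list B n)) = P (bst_inf B)"
      using Pinv[OF bst_pclosed pclosed_inf] n0 by blast
  qed
  then show ?thesis by blast
qed

lemma Einf_eq:
  assumes Pinv: "\<And>V V'. pclosed V \<Longrightarrow> pclosed V' \<Longrightarrow> trunc r V = trunc r V' \<Longrightarrow> P V = P V'"
  shows "{B \<in> space (bern_array q). P (bst_inf B)}
       = (\<Union>n0. \<Inter>n\<in>{n0..}. {B \<in> space (bern_array q). P (bst (mallows_list B n))})"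
proof (intro set_eqI iffI)
  fix B assume "B \<in> {B \<in> space (bern_array q). P (bst_inf B)}"
  then have B: "B \<in> space (bern_array q)" "P (bst_inf B)" by auto
  obtain n0 where n0: "\<forall>n\<ge>n0. P (bst (mallows_list B n)) = P (bst_inf B)"
    using evP[where r=r and P=P and B=B, OF Pinv] by blast
  have "B \<in> (\<Inter>n\<in>{n0..}. {B \<in> space (bern_array q). P (bst (mallows_list B n))})"
    using n0 B by simp
  then show "B \<in> (\<Union>n0. \<Inter>n\<in>{n0..}. {B \<in> space (bern_array q). P (bst (mallows_list B n))})"
    by blast
next
  fix B assume "B \<in> (\<Union>n0. \<Inter>n\<in>{n0..}. {B \<in> space (bern_array q). P (bst (mallows_list B n))})"
  then obtain n0 where h: "\<forall>n\<ge>n0. P (bst (mallows_list B n))" "B \<in> space (bern_array q)" by auto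
  obtain n1 where "\<forall>n\<ge>n1. P (bst (mallows_list B n)) = P (bst_inf B)" using evP[where r=r and P=P and B=B, OF Pinv] by blast
  then show "B \<in> {B \<in> space (bern_array q). P (bst_inf B)}" using h(1)[rule_format, of "max n0 n1"] h(2) by auto
qed

lemma Einf_sets:
  assumes Pinv: "\<And>V V'. pclosed V \<Longrightarrow> pclosed V' \<Longrightarrow> trunc r V = trunc r V' \<Longrightarrow> P V = P V'"
  shows "{B \<in> space (bern_array q). P (bst_inf B)} \<in> sets (bern_array q)"
proof -
  have X: "(\<Union>n0. \<Inter>n\<in>{n0..}. {B \<in> space (bern_array q). P (bst (mallows_list B n))}) \<in> sets (bern_array q)"
  proof (rule sets.countable_UN)
    show "range (\<lambda>n0. \<Inter>n\<in>{n0..}. {B \<in> space (bern_array q). P (bst (mallows_list B n))}) \<subseteq> sets (bern_array q)"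
    proof
      fix X assume "X \<in> range (\<lambda>n0. \<Inter>n\<in>{n0..}. {B \<in> space (bern_array q). P (bst (mallows_list B n))})"
      then obtain n0 where X: "X = (\<Inter>n\<in>{n0..}. {B \<in> space (bern_array q). P (bst (mallows_list B n))})" by auto
      show "X \<in> sets (bern_array q)" unfolding X
      proof (rule sets.countable_INT)
        show "(\<lambda>n. {B \<in> space (bern_array q). P (bst (mallows_list B n))}) ` {n0..} \<subseteq> sets (bern_array q)"
          by (rule image_subsetI) (rule ml_event)
        show "{n0..} \<noteq> {}" by auto
      qed
    qed
  qed
  have eq: "{B \<in> space (bern_array q). P (bst_inf B)}
       = (\<Union>n0. \<Inter>n\<in>{n0..}. {B \<in> space (bern_array q). P (bst (mallows_list B n))})"
    by (rule Einf_eq) (fact Pinv)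
  show ?thesis using X eq by (simp only:)
qed

lemma H_lim:
  assumes Pinv: "\<And>V V'. pclosed V \<Longrightarrow> pclosed V' \<Longrightarrow> trunc r V = trunc r V' \<Longrightarrow> P V = P V'"
  shows "(\<lambda>n. measure (bern_array q) {B \<in> space (bern_array q). P (bst (mallows_list B n))})
           \<longlonglongrightarrow> measure (bern_array q) {B \<in> space (bern_array q). P (bst_inf B)}"
proof -
  interpret prob_space "bern_array q" by (rule prob_space_bern)
  let ?E = "\<lambda>n. {B \<in> space (bern_array q). P (bst (mallows_list B n))}"
  let ?F = "{B \<in> space (bern_array q). P (bst_inf B)}"
  have sE: "\<And>n. ?E n \<in> sets (bern_array q)" by (rule ml_event)
  have sF: "?F \<in> sets (bern_array q)" by (rule Einf_sets) (fact Pinv)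
  have "(\<lambda>n. integral\<^sup>L (bern_array q) (indicator (?E n) :: _ \<Rightarrow> real)) \<longlonglongrightarrow> integral\<^sup>L (bern_array q) (indicator ?F)"
  proof (rule integral_dominated_convergence[where w="\<lambda>_. 1"])
    show "(indicator ?F :: _ \<Rightarrow> real) \<in> borel_measurable (bern_array q)"
      using sF by (rule borel_measurable_indicator)
    show "\<And>n. (indicator (?E n) :: _ \<Rightarrow> real) \<in> borel_measurable (bern_array q)"
      using sE by (rule borel_measurable_indicator)
    show "integrable (bern_array q) (\<lambda>_. 1::real)" by simp
    show "\<And>n. AE x in bern_array q. norm (indicator (?E n) x :: real) \<le> 1"
      by (auto simp: indicator_def)
    show "AE x in bern_array q. (\<lambda>n. indicator (?E n) x :: real) \<longlonglongrightarrow> indicator ?F x"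
    proof (rule AE_I2)
      fix B assume B: "B \<in> space (bern_array q)"
      obtain n0 where n0: "\<forall>n\<ge>n0. P (bst (mallows_list B n)) = P (bst_inf B)"
        using evP[where r=r and P=P and B=B, OF Pinv] by blast
      have "eventually (\<lambda>n. (indicator (?E n) B :: real) = indicator ?F B) sequentially"
        unfolding eventually_sequentially using n0 B by (auto simp: indicator_def)
      then show "(\<lambda>n. indicator (?E n) B :: real) \<longlonglongrightarrow> indicator ?F B"
        by (rule tendsto_eventually)
    qed
  qed
  moreover have "\<And>n. integral\<^sup>L (bern_array q) (indicator (?E n) :: _ \<Rightarrow> real) = measure (bern_array q) (?E n)"
    by (simp add: Int_absorb2)
  moreover have "integral\<^sup>L (bern_array q) (indicator ?F :: _ \<Rightarrow> real) = measure (bern_array q) ?F"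
    by (simp add: Int_absorb2)
  ultimately show ?thesis by simp
qed




declare upt_Suc[simp del]

definition Wt :: "real \<Rightarrow> nat \<Rightarrow> real" where
  "Wt q N = (\<Sum>\<tau>\<in>permutations_of_set {1..N}. q ^ invl \<tau>)"

definition Xf :: "real \<Rightarrow> (nat list \<Rightarrow> bool) \<Rightarrow> nat \<Rightarrow> real" where
  "Xf q Q N = (\<Sum>\<tau>\<in>permutations_of_set {1..N}. (if Q \<tau> then 1 else 0) * q ^ invl \<tau>)"

lemma mallows_prob_list:
  "mallows_prob q N (\<lambda>\<sigma>. Q (map \<sigma> [1..<Suc N])) = Xf q Q N / Wt q N"
proof -
  have fin: "finite {\<sigma>. \<sigma> permutes {1..N}}" by (rule finite_permutations) simp
  have num: "(\<Sum>\<sigma> | \<sigma> permutes {1..N} \<and> Q (map \<sigma> [1..<Suc N]). q ^ inv_count N \<sigma>)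
      = (\<Sum>\<sigma>\<in>{\<sigma>. \<sigma> permutes {1..N}}. (if Q (map \<sigma> [1..<Suc N]) then 1 else 0) * q ^ invl (map \<sigma> [1..<Suc N]))"
  proof -
    have "{\<sigma>. \<sigma> permutes {1..N} \<and> Q (map \<sigma> [1..<Suc N])} = {\<sigma> \<in> {\<sigma>. \<sigma> permutes {1..N}}. Q (map \<sigma> [1..<Suc N])}"
      by auto
    then have "(\<Sum>\<sigma> | \<sigma> permutes {1..N} \<and> Q (map \<sigma> [1..<Suc N]). q ^ inv_count N \<sigma>)
        = (\<Sum>\<sigma>\<in>{\<sigma>. \<sigma> permutes {1..N}}. if Q (map \<sigma> [1..<Suc N]) then q ^ inv_count N \<sigma> else 0)"
      using sum.inter_filter[OF fin, of "\<lambda>\<sigma>. q ^ inv_count N \<sigma>" "\<lambda>\<sigma>. Q (map \<sigma> [1..<Suc N])"] by simp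
    then show ?thesis by (simp only:) (intro sum.cong, auto simp: inv_count_invl)
  qed
  have "(\<Sum>\<sigma>\<in>{\<sigma>. \<sigma> permutes {1..N}}. (if Q (map \<sigma> [1..<Suc N]) then 1 else 0) * q ^ invl (map \<sigma> [1..<Suc N]))
      = Xf q Q N"
    unfolding Xf_def by (rule sum.reindex_bij_betw[OF perm_list_bij])
  moreover have "mallows_Z q N = Wt q N"
    unfolding mallows_Z_def Wt_def inv_count_invl by (rule sum.reindex_bij_betw[OF perm_list_bij])
  ultimately show ?thesis unfolding mallows_prob_def using num by simp
qed

lemma invl_upt: "invl [1..<Suc N] = 0"
proof -
  have "{(i, j). i < j \<and> j < length [1..<Suc N] \<and> [1..<Suc N] ! j < [1..<Suc N] ! i} = {}"
    by (auto simp: nth_upt)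
  then show ?thesis unfolding invl_def by (simp only: card.empty)
qed

lemma Wt_pos:
  assumes "0 \<le> q"
  shows "Wt q N \<ge> 1"
proof -
  have mem: "[1..<Suc N] \<in> permutations_of_set {1..N}"
    by (simp add: permutations_of_set_def atLeastLessThanSuc_atLeastAtMost del: upt_Suc)
  have "q ^ invl [1..<Suc N] \<le> Wt q N"
    unfolding Wt_def by (rule member_le_sum[OF mem]) (use assms in auto)
  then show ?thesis using invl_upt[of N] by simp
qed

lemma Xf_compl: "Xf q (\<lambda>a. \<not> Q a) N = Wt q N - Xf q Q N"
proof -
  have "\<And>\<tau>. (if \<not> Q \<tau> then 1 else 0) * q ^ invl \<tau> = q ^ invl \<tau> - (if Q \<tau> then 1 else 0) * q ^ invl \<tau>"
    by simp
  then show ?thesis unfolding Xf_def Wt_def by (simp add: sum_subtractf)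
qed

lemma key_ineq:
  fixes q :: real
  assumes q: "0 \<le> q" "q < 1"
    and inv: "\<And>\<tau> g. strict_mono_on (set \<tau>) g \<Longrightarrow> Q (map g \<tau>) = Q \<tau>"
  shows "(1 - q) ^ N * (\<Sum>a\<in>AL M N. q ^ Gc a) * (Xf q Q N / Wt q N)
         \<le> measure (bern_array q) {B \<in> space (bern_array q). Q (mallows_list B N)}"
proof -
  interpret prob_space "bern_array q" by (rule prob_space_bern)
  let ?f = "\<lambda>a. if Q a then 1 else (0::real)"
  let ?K = "\<Sum>S\<in>Ssets M N. q ^ hS S"
  have p1: "(\<Sum>a\<in>AL M N. ?f a * q ^ Gc a) = ?K * Xf q Q N"
    unfolding Xf_def by (rule pattern_sum) (use inv in simp)
  have p2: "(\<Sum>a\<in>AL M N. q ^ Gc a) = ?K * Wt q N"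
    using pattern_sum[where f="\<lambda>_. 1" and M=M and N=N and q=q] unfolding Wt_def by simp
  have W: "Wt q N > 0" using Wt_pos[OF q(1), of N] by linarith
  have lhs: "(1 - q) ^ N * (\<Sum>a\<in>AL M N. q ^ Gc a) * (Xf q Q N / Wt q N)
      = (\<Sum>a\<in>AL M N. ?f a * ((1 - q) ^ N * q ^ Gc a))"
  proof -
    have r: "(\<Sum>a\<in>AL M N. ?f a * ((1 - q) ^ N * q ^ Gc a)) = (1 - q) ^ N * (\<Sum>a\<in>AL M N. ?f a * q ^ Gc a)"
      by (simp add: sum_distrib_left mult_ac)
    have w: "(1 - q) ^ N * (?K * Wt q N) * (Xf q Q N / Wt q N) = (1 - q) ^ N * (?K * Xf q Q N)"
      using W by (simp add: field_simps)
    show ?thesis unfolding p2 r p1 w ..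
  qed
  also have "\<dots> = (\<Sum>a\<in>{a \<in> AL M N. Q a}. measure (bern_array q) (Cyl a))"
  proof -
    have "(\<Sum>a\<in>AL M N. ?f a * ((1 - q) ^ N * q ^ Gc a)) = (\<Sum>a\<in>{a \<in> AL M N. Q a}. (1 - q) ^ N * q ^ Gc a)"
      using sum.inter_filter[of "AL M N" "\<lambda>a. (1 - q) ^ N * q ^ Gc a" Q] finite_AL[of M N]
      by (simp add: if_distrib[where f="\<lambda>x. x * _"] cong: if_cong)
    also have "\<dots> = (\<Sum>a\<in>{a \<in> AL M N. Q a}. measure (bern_array q) (Cyl a))"
    proof (rule sum.cong[OF refl])
      fix a assume "a \<in> {a \<in> AL M N. Q a}"
      then have "distinct a" "0 \<notin> set a" "length a = N" unfolding AL_def by auto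
      then show "(1 - q) ^ N * q ^ Gc a = measure (bern_array q) (Cyl a)"
        using measure_Cyl[of q a] q by simp
    qed
    finally show ?thesis .
  qed
  also have "\<dots> = measure (bern_array q) (\<Union>a\<in>{a \<in> AL M N. Q a}. Cyl a)"
  proof (rule measure_finite_Union[symmetric])
    show "finite {a \<in> AL M N. Q a}" using finite_AL by simp
    show "Cyl ` {a \<in> AL M N. Q a} \<subseteq> sets (bern_array q)" using Cyl_sets by blast
    show "disjoint_family_on Cyl {a \<in> AL M N. Q a}"
      unfolding disjoint_family_on_def
    proof (intro ballI impI)
      fix a b assume ab: "a \<in> {a \<in> AL M N. Q a}" "b \<in> {a \<in> AL M N. Q a}" "a \<noteq> b"
      then have ha: "distinct a" "0 \<notin> set a" "length a = N" and hb: "distinct b" "0 \<notin> set b" "length b = N"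
        unfolding AL_def by auto
      show "Cyl a \<inter> Cyl b = {}"
      proof (rule ccontr)
        assume "Cyl a \<inter> Cyl b \<noteq> {}"
        then obtain B where B: "B \<in> Cyl a" "B \<in> Cyl b" by blast
        have "mallows_list B N = a" using Cyl_ml[OF ha(1,2) B(1)] ha(3) by simp
        moreover have "mallows_list B N = b" using Cyl_ml[OF hb(1,2) B(2)] hb(3) by simp
        ultimately have "a = b" by simp
        then show False using ab(3) by simp
      qed
    qed
    show "\<And>a. a \<in> {a \<in> AL M N. Q a} \<Longrightarrow> emeasure (bern_array q) (Cyl a) \<noteq> \<infinity>"
      by (simp add: emeasure_eq_measure)
  qed
  also have "\<dots> \<le> measure (bern_array q) {B \<in> space (bern_array q). Q (mallows_list B N)}"
  proof (rule finite_measure_mono)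
    show "{B \<in> space (bern_array q). Q (mallows_list B N)} \<in> sets (bern_array q)" by (rule ml_event)
    show "(\<Union>a\<in>{a \<in> AL M N. Q a}. Cyl a) \<subseteq> {B \<in> space (bern_array q). Q (mallows_list B N)}"
    proof
      fix B assume "B \<in> (\<Union>a\<in>{a \<in> AL M N. Q a}. Cyl a)"
      then obtain a where a: "a \<in> AL M N" "Q a" "B \<in> Cyl a" by auto
      then have "distinct a" "0 \<notin> set a" "length a = N" unfolding AL_def by auto
      then have "mallows_list B N = a" using Cyl_ml a(3) by blast
      then show "B \<in> {B \<in> space (bern_array q). Q (mallows_list B N)}" using a(2) by (simp add: space_bern)
    qed
  qed
  finally show ?thesis .
qed

lemma s_lim:
  fixes q :: real
  assumes q: "0 \<le> q" "q < 1"
  shows "(\<lambda>M. (1 - q) ^ N * (\<Sum>a\<in>AL M N. q ^ Gc a)) \<longlonglongrightarrow> 1"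
proof -
  have g: "(\<lambda>m. \<Sum>i<m. q ^ i) \<longlonglongrightarrow> 1 / (1 - q)"
    using geometric_sums[of q] q by (simp add: sums_def)
  have "(\<lambda>M. \<Prod>k<N. \<Sum>i<M - k. q ^ i) \<longlonglongrightarrow> (\<Prod>k<N. 1 / (1 - q))"
    by (rule tendsto_prod) (rule seq_offset_neg[OF g])
  then have "(\<lambda>M. (1 - q) ^ N * (\<Prod>k<N. \<Sum>i<M - k. q ^ i)) \<longlonglongrightarrow> (1 - q) ^ N * (\<Prod>k<N. 1 / (1 - q))"
    by (rule tendsto_mult[OF tendsto_const])
  moreover have "(1 - q) ^ N * (\<Prod>k<N. 1 / (1 - q)) = 1"
    using q by (simp add: power_one_over[symmetric] power_mult_distrib[symmetric])
  ultimately show ?thesis by (simp add: sum_Gc)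
qed

lemma F_eq_H:
  fixes q :: real
  assumes q: "0 \<le> q" "q < 1"
    and inv: "\<And>\<tau> g. strict_mono_on (set \<tau>) g \<Longrightarrow> Q (map g \<tau>) = Q \<tau>"
  shows "Xf q Q N / Wt q N = measure (bern_array q) {B \<in> space (bern_array q). Q (mallows_list B N)}"
proof -
  interpret prob_space "bern_array q" by (rule prob_space_bern)
  let ?s = "\<lambda>M. (1 - q) ^ N * (\<Sum>a\<in>AL M N. q ^ Gc a)"
  let ?F = "Xf q Q N / Wt q N"
  let ?H = "measure (bern_array q) {B \<in> space (bern_array q). Q (mallows_list B N)}"
  have W: "Wt q N > 0" using Wt_pos[OF q(1), of N] by linarith
  have inv': "\<And>\<tau> g. strict_mono_on (set \<tau>) g \<Longrightarrow> (\<not> Q (map g \<tau>)) = (\<not> Q \<tau>)" using inv by simp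
  have c: "measure (bern_array q) {B \<in> space (bern_array q). \<not> Q (mallows_list B N)} = 1 - ?H"
  proof -
    have "{B \<in> space (bern_array q). \<not> Q (mallows_list B N)} = space (bern_array q) - {B \<in> space (bern_array q). Q (mallows_list B N)}"
      by auto
    then show ?thesis using prob_compl[OF ml_event] by simp
  qed
  have Fc: "Xf q (\<lambda>a. \<not> Q a) N / Wt q N = 1 - ?F" using W by (simp add: Xf_compl field_simps)
  have le1: "?F \<le> ?H"
  proof (rule tendsto_le[OF trivial_limit_sequentially])
    show "(\<lambda>M. ?H) \<longlonglongrightarrow> ?H" by simp
    show "(\<lambda>M. ?s M * ?F) \<longlonglongrightarrow> ?F" using tendsto_mult[OF s_lim[OF q] tendsto_const[of ?F]] by simp
    show "eventually (\<lambda>M. ?s M * ?F \<le> ?H) sequentially"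
      using key_ineq[OF q inv] by (simp add: mult.assoc)
  qed
  have le2: "1 - ?F \<le> 1 - ?H"
  proof (rule tendsto_le[OF trivial_limit_sequentially])
    show "(\<lambda>M. 1 - ?H) \<longlonglongrightarrow> 1 - ?H" by simp
    show "(\<lambda>M. ?s M * (1 - ?F)) \<longlonglongrightarrow> 1 - ?F" using tendsto_mult[OF s_lim[OF q] tendsto_const[of "1 - ?F"]] by simp
    show "eventually (\<lambda>M. ?s M * (1 - ?F) \<le> 1 - ?H) sequentially"
      using key_ineq[OF q inv', of N] unfolding Fc c by (simp add: mult.assoc)
  qed
  show ?thesis using le1 le2 by simp
qed


theorem theorem1p3:
  fixes q :: real and r :: nat and T :: "'a set" and E :: "('a \<times> 'a) set" and \<rho> :: 'a
  assumes "0 \<le> q" and "q < 1" and "1 \<le> r"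
    and "finite_rooted_tree T E \<rho>"
  shows "(\<lambda>n. mallows_prob q n (\<lambda>\<sigma>. ball_iso r [] (bst_perm n \<sigma>) T E \<rho>))
           \<longlonglongrightarrow> measure (bern_array q) {B \<in> space (bern_array q). ball_iso r [] (bst_inf B) T E \<rho>}"
proof -
  let ?P = "\<lambda>V. ball_iso r [] V T E \<rho>"
  let ?Q = "\<lambda>a. ?P (bst a)"
  have Pinv: "\<And>V V'. pclosed V \<Longrightarrow> pclosed V' \<Longrightarrow> trunc r V = trunc r V' \<Longrightarrow> ?P V = ?P V'"
    by (rule ball_iso_cong) (simp add: ball_verts_trunc)
  have Qinv: "\<And>\<tau> g. strict_mono_on (set \<tau>) g \<Longrightarrow> ?Q (map g \<tau>) = ?Q \<tau>"
    by (simp add: bst_map_mono)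
  have eq: "mallows_prob q n (\<lambda>\<sigma>. ball_iso r [] (bst_perm n \<sigma>) T E \<rho>)
      = measure (bern_array q) {B \<in> space (bern_array q). ?P (bst (mallows_list B n))}" for n
  proof -
    have "mallows_prob q n (\<lambda>\<sigma>. ball_iso r [] (bst_perm n \<sigma>) T E \<rho>)
        = mallows_prob q n (\<lambda>\<sigma>. ?Q (map \<sigma> [1..<Suc n]))"
      unfolding bst_perm_def ..
    also have "\<dots> = Xf q ?Q n / Wt q n" by (rule mallows_prob_list)
    also have "\<dots> = measure (bern_array q) {B \<in> space (bern_array q). ?Q (mallows_list B n)}"
      by (rule F_eq_H[OF assms(1,2)]) (rule Qinv)
    finally show ?thesis .
  qed
  show ?thesis unfolding eq by (rule H_lim) (rule Pinv)
qed



end
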